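(* Let $G$ be a cyclic group of prime order $p$. Suppose $A_{-1}=0,A_0,\dots,A_n,A_{n+1}=0$ are $\mathbb{Z}_p[G]$-modules (finitely generated and free over $\mathbb{Z}_p$) with $\mathbb{Z}_p[G]$-module maps $d:A_i\to A_{i+1}$ and $d^*:A_{i+1}\to A_i$ for all $i$, such that $d^2=0$, $d^{*2}=0$ and $dd^*+d^*d=k$ for a fixed integer $k$ coprime to $p$. Then $[A_0]-[A_1]+[A_2]-\cdots+(-1)^n[A_n]=0$ in $K$.
   Context: $K$ is the free $\mathbb{Q}$-module with basis $[\mathbb{Z}_p]=1,[\mathbb{Z}_p[G]],[I]$ where $I=\ker(\mathbb{Z}_p[G]\to\mathbb{Z}_p)$ (these are the indecomposable $\mathbb{Z}_p[G]$-modules free of finite rank over $\mathbb{Z}_p$), with ring structure induced by direct sum and tensor product; $[A]$ is the class of $A$ given by its decomposition into indecomposables (no relations from non-split exact sequences are imposed). *)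

theory Defs
  imports "HOL-Computational_Algebra.Primes"
begin

text \<open>
  p-adic integers Z_p, realised as the inverse limit of the rings Z/p^l:
  an element is a compatible sequence of canonical residues x l in [0, p^l).
  Ring operations are computed levelwise (reduction mod p^l), which is exactly
  the ring structure of the inverse limit.
\<close>

definition zp :: "nat \<Rightarrow> (nat \<Rightarrow> int) set" where
  "zp p = {x. (\<forall>l. 0 \<le> x l \<and> x l < int p ^ l) \<and> (\<forall>l. x (Suc l) mod int p ^ l = x l)}"

text \<open>Matrices over Z_p: entry (i,j) is a p-adic integer; entries outside the
  declared size are zero (canonical representation).\<close>

type_synonym zpmat = "nat \<Rightarrow> nat \<Rightarrow> nat \<Rightarrow> int"

definition zzero :: "nat \<Rightarrow> int" where "zzero = (\<lambda>_. 0)"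

definition zp_of_int :: "nat \<Rightarrow> int \<Rightarrow> nat \<Rightarrow> int" where
  "zp_of_int p k = (\<lambda>l. k mod int p ^ l)"

definition zp_mat :: "nat \<Rightarrow> nat \<Rightarrow> nat \<Rightarrow> zpmat \<Rightarrow> bool" where
  "zp_mat p m r M \<longleftrightarrow> (\<forall>i j. if i < m \<and> j < r then M i j \<in> zp p else M i j = zzero)"

definition mzero :: zpmat where "mzero = (\<lambda>i j. zzero)"

definition mmul :: "nat \<Rightarrow> nat \<Rightarrow> nat \<Rightarrow> nat \<Rightarrow> zpmat \<Rightarrow> zpmat \<Rightarrow> zpmat" where
  "mmul p m k r M N = (\<lambda>i j. if i < m \<and> j < r
       then (\<lambda>l. (\<Sum>t<k. M i t l * N t j l) mod int p ^ l) else zzero)"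

definition madd :: "nat \<Rightarrow> nat \<Rightarrow> nat \<Rightarrow> zpmat \<Rightarrow> zpmat \<Rightarrow> zpmat" where
  "madd p m r M N = (\<lambda>i j. if i < m \<and> j < r
       then (\<lambda>l. (M i j l + N i j l) mod int p ^ l) else zzero)"

definition mint :: "nat \<Rightarrow> nat \<Rightarrow> int \<Rightarrow> zpmat" where
  "mint p m k = (\<lambda>i j. if i < m \<and> j < m \<and> i = j then zp_of_int p k else zzero)"

fun mpow :: "nat \<Rightarrow> nat \<Rightarrow> zpmat \<Rightarrow> nat \<Rightarrow> zpmat" where
  "mpow p m S 0 = mint p m 1"
| "mpow p m S (Suc e) = mmul p m m m S (mpow p m S e)"

text \<open>
  Z_p[G]-modules that are free of finite rank over Z_p, for G cyclic of order p
  with a fixed generator sigma: the module Z_p^r together with the matrix S of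
  sigma, which must satisfy S^p = 1.
\<close>

definition glat :: "nat \<Rightarrow> nat \<Rightarrow> zpmat \<Rightarrow> bool" where
  "glat p r S \<longleftrightarrow> zp_mat p r r S \<and> mpow p r S p = mint p r 1"

definition gmap :: "nat \<Rightarrow> nat \<Rightarrow> zpmat \<Rightarrow> nat \<Rightarrow> zpmat \<Rightarrow> zpmat \<Rightarrow> bool" where
  "gmap p r S r' S' D \<longleftrightarrow> zp_mat p r' r D \<and> mmul p r' r r D S = mmul p r' r' r S' D"

definition giso :: "nat \<Rightarrow> nat \<Rightarrow> zpmat \<Rightarrow> nat \<Rightarrow> zpmat \<Rightarrow> bool" where
  "giso p r S r' S' \<longleftrightarrow> (\<exists>P Q. gmap p r S r' S' P \<and> gmap p r' S' r S Q \<and>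
       mmul p r r' r Q P = mint p r 1 \<and> mmul p r' r r' P Q = mint p r' 1)"

text \<open>The three indecomposables. Z_p: trivial action.\<close>
definition triv_mat :: "nat \<Rightarrow> zpmat" where "triv_mat p = mint p 1 1"

text \<open>Z_p[G] with basis 1, sigma, ..., sigma^(p-1): sigma permutes the basis cyclically.\<close>
definition reg_mat :: "nat \<Rightarrow> zpmat" where
  "reg_mat p = (\<lambda>i j. if i < p \<and> j < p \<and> i = (j + 1) mod p then zp_of_int p 1 else zzero)"

text \<open>I = ker(Z_p[G] -> Z_p), Z_p-basis e_j = (1 - sigma) sigma^j, j = 0..p-2:
  sigma e_j = e_(j+1) for j < p-2 and sigma e_(p-2) = -(e_0 + ... + e_(p-2)).\<close>
definition aug_mat :: "nat \<Rightarrow> zpmat" where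
  "aug_mat p = (\<lambda>i j. if i < p - 1 \<and> j < p - 1 then
       (if j < p - 2 then (if i = j + 1 then zp_of_int p 1 else zzero) else zp_of_int p (-1))
     else zzero)"

fun bdiag :: "(nat \<times> zpmat) list \<Rightarrow> zpmat" where
  "bdiag [] = mzero"
| "bdiag ((r, M) # Ms) = (\<lambda>i j. if i < r \<and> j < r then M i j
      else if r \<le> i \<and> r \<le> j then bdiag Ms (i - r) (j - r) else zzero)"

definition std_sum :: "nat \<Rightarrow> nat \<Rightarrow> nat \<Rightarrow> nat \<Rightarrow> zpmat" where
  "std_sum p a b c = bdiag (replicate a (1, triv_mat p) @ replicate b (p, reg_mat p)
                           @ replicate c (p - 1, aug_mat p))"

text \<open>(r,S) decomposes as Z_p^a + Z_p[G]^b + I^c, i.e. [A] = a[Z_p] + b[Z_p[G]] + c[I] in K.\<close>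
definition has_class :: "nat \<Rightarrow> nat \<Rightarrow> zpmat \<Rightarrow> nat \<Rightarrow> nat \<Rightarrow> nat \<Rightarrow> bool" where
  "has_class p r S a b c \<longleftrightarrow> r = a + p * b + (p - 1) * c \<and> giso p r S r (std_sum p a b c)"

end

theory Submission
  imports Defs Complex_Main
begin

lemma sum_mod_left: "(\<Sum>t\<in>T. (f t mod (P::int)) * g t) mod P = (\<Sum>t\<in>T. f t * g t) mod P"
proof -
  have "(\<Sum>t\<in>T. (f t mod P) * g t) mod P = (\<Sum>t\<in>T. ((f t mod P) * g t) mod P) mod P"
    by (simp add: mod_sum_eq)
  also have "\<dots> = (\<Sum>t\<in>T. (f t * g t) mod P) mod P" by (simp add: mod_mult_left_eq)
  also have "\<dots> = (\<Sum>t\<in>T. f t * g t) mod P" by (simp add: mod_sum_eq)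
  finally show ?thesis .
qed

lemma sum_mod_right: "(\<Sum>t\<in>T. g t * (f t mod (P::int))) mod P = (\<Sum>t\<in>T. g t * f t) mod P"
  using sum_mod_left[of f P g T] by (simp add: mult.commute)

lemma mmul_assoc:
  "mmul p m k r (mmul p m q k A B) C = mmul p m q r A (mmul p q k r B C)"
proof (intro ext)
  fix i j l
  show "mmul p m k r (mmul p m q k A B) C i j l = mmul p m q r A (mmul p q k r B C) i j l"
  proof (cases "i < m \<and> j < r")
    case True
    let ?P = "int p ^ l"
    have "mmul p m k r (mmul p m q k A B) C i j l
        = (\<Sum>t<k. ((\<Sum>s<q. A i s l * B s t l) mod ?P) * C t j l) mod ?P"
      using True by (simp add: mmul_def)
    also have "\<dots> = (\<Sum>t<k. (\<Sum>s<q. A i s l * B s t l) * C t j l) mod ?P"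
      by (rule sum_mod_left)
    also have "\<dots> = (\<Sum>s<q. A i s l * (\<Sum>t<k. B s t l * C t j l)) mod ?P"
      by (simp add: sum_distrib_left sum_distrib_right mult.assoc sum.swap[of _ "{..<k}"])
    also have "\<dots> = (\<Sum>s<q. A i s l * ((\<Sum>t<k. B s t l * C t j l) mod ?P)) mod ?P"
      by (rule sum_mod_right[symmetric])
    also have "\<dots> = mmul p m q r A (mmul p q k r B C) i j l"
      using True by (simp add: mmul_def)
    finally show ?thesis .
  qed (auto simp: mmul_def)
qed

definition tr :: "nat \<Rightarrow> nat \<Rightarrow> zpmat \<Rightarrow> int" where
  "tr l m M = (\<Sum>i<m. M i i l)"

lemma tr_comm:
  "tr l m (mmul p m k m A B) mod (int p ^ l) = tr l k (mmul p k m k B A) mod (int p ^ l)"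
proof -
  let ?P = "int p ^ l"
  have "tr l m (mmul p m k m A B) mod ?P = (\<Sum>i<m. (\<Sum>t<k. A i t l * B t i l) mod ?P) mod ?P"
    by (simp add: tr_def mmul_def)
  also have "\<dots> = (\<Sum>i<m. \<Sum>t<k. A i t l * B t i l) mod ?P" by (simp add: mod_sum_eq)
  also have "\<dots> = (\<Sum>t<k. \<Sum>i<m. B t i l * A i t l) mod ?P"
    by (subst sum.swap) (simp add: mult.commute)
  also have "\<dots> = (\<Sum>t<k. (\<Sum>i<m. B t i l * A i t l) mod ?P) mod ?P" by (simp add: mod_sum_eq)
  also have "\<dots> = tr l k (mmul p k m k B A) mod ?P"
    by (simp add: tr_def mmul_def)
  finally show ?thesis .
qed

lemma tr_mmul_mint:
  "tr l m (mmul p m m m X (mint p m k)) mod (int p ^ l) = (k * tr l m X) mod (int p ^ l)"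
proof -
  let ?P = "int p ^ l"
  have e: "(\<Sum>t<m. X i t l * mint p m k t i l) = X i i l * (k mod ?P)" if "i < m" for i
  proof -
    have "(\<Sum>t<m. X i t l * mint p m k t i l) = (\<Sum>t<m. if t = i then X i i l * (k mod ?P) else 0)"
      by (rule sum.cong) (auto simp: zp_of_int_def zzero_def mint_def that)
    also have "\<dots> = X i i l * (k mod ?P)" using that by simp
    finally show ?thesis .
  qed
  have "tr l m (mmul p m m m X (mint p m k)) = (\<Sum>i<m. (\<Sum>t<m. X i t l * mint p m k t i l) mod ?P)"
    by (simp add: tr_def mmul_def)
  also have "\<dots> = (\<Sum>i<m. X i i l * (k mod ?P) mod ?P)"
    by (rule sum.cong) (simp_all add: e)
  finally have "tr l m (mmul p m m m X (mint p m k)) mod ?P = (\<Sum>i<m. X i i l * (k mod ?P) mod ?P) mod ?P"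
    by simp
  also have "\<dots> = (\<Sum>i<m. X i i l * (k mod ?P)) mod ?P" by (simp add: mod_sum_eq)
  also have "\<dots> = (\<Sum>i<m. X i i l * k) mod ?P" by (rule sum_mod_right)
  also have "\<dots> = (k * tr l m X) mod ?P" by (simp add: tr_def sum_distrib_left mult.commute)
  finally show ?thesis .
qed

lemma tr_mmul_madd:
  "tr l m (mmul p m m m X (madd p m m Y Z)) mod (int p ^ l)
   = (tr l m (mmul p m m m X Y) + tr l m (mmul p m m m X Z)) mod (int p ^ l)"
proof -
  let ?P = "int p ^ l"
  have "tr l m (mmul p m m m X (madd p m m Y Z)) mod ?P
      = (\<Sum>i<m. (\<Sum>t<m. X i t l * ((Y t i l + Z t i l) mod ?P)) mod ?P) mod ?P"
    by (simp add: tr_def mmul_def madd_def)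
  also have "\<dots> = (\<Sum>i<m. (\<Sum>t<m. X i t l * (Y t i l + Z t i l))) mod ?P"
    by (simp add: mod_sum_eq sum_mod_right)
  also have "\<dots> = ((\<Sum>i<m. \<Sum>t<m. X i t l * Y t i l) + (\<Sum>i<m. \<Sum>t<m. X i t l * Z t i l)) mod ?P"
    by (simp add: distrib_left sum.distrib)
  also have "\<dots> = ((\<Sum>i<m. (\<Sum>t<m. X i t l * Y t i l) mod ?P) + (\<Sum>i<m. (\<Sum>t<m. X i t l * Z t i l) mod ?P)) mod ?P"
    by (simp only: mod_add_eq[symmetric, of "\<Sum>i<m. (\<Sum>t<m. X i t l * Y t i l) mod ?P"] mod_sum_eq) (simp add: mod_add_eq)
  also have "\<dots> = (tr l m (mmul p m m m X Y) + tr l m (mmul p m m m X Z)) mod ?P"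
    by (simp add: tr_def mmul_def)
  finally show ?thesis .
qed

lemma tr_mmul_mzero: "tr l m (mmul p m m m X mzero) = 0"
  by (simp add: tr_def mmul_def mzero_def zzero_def)

lemma mod_add_cong_l: "(a::int) mod P = a' mod P \<Longrightarrow> (a + b) mod P = (a' + b) mod P"
  by (metis mod_add_left_eq)

lemma telescope:
  fixes T :: "nat \<Rightarrow> 'a::comm_ring_1"
  shows "(\<Sum>i\<le>n. (-1) ^ i * ((if 0 < i then T (i - 1) else 0) + (if i < n then T i else 0))) = 0"
proof (cases n)
  case 0 then show ?thesis by simp
next
  case (Suc m)
  have a: "(\<Sum>i\<le>n. (-1) ^ i * (if 0 < i then T (i - 1) else 0)) = (\<Sum>i\<le>m. (-1) ^ Suc i * T i)"
    unfolding Suc by (subst sum.atMost_Suc_shift) simp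
  have b: "(\<Sum>i\<le>n. (-1) ^ i * (if i < n then T i else 0)) = (\<Sum>i\<le>m. (-1) ^ i * T i)"
    unfolding Suc by (simp add: sum.atMost_Suc)
  show ?thesis using a b by (simp add: distrib_left sum.distrib sum_negf)
qed

lemma trace_telescope:
  fixes r :: "nat \<Rightarrow> nat" and X d ds :: "nat \<Rightarrow> zpmat"
  assumes rel: "\<forall>i\<le>n. madd p (r i) (r i)
            (if 0 < i then mmul p (r i) (r (i - 1)) (r i) (d (i - 1)) (ds (i - 1)) else mzero)
            (if i < n then mmul p (r i) (r (Suc i)) (r i) (ds i) (d i) else mzero)
          = mint p (r i) k"
    and comm: "\<forall>i<n. mmul p (r (Suc i)) (r i) (r i) (d i) (X i) = mmul p (r (Suc i)) (r (Suc i)) (r i) (X (Suc i)) (d i)"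
  shows "(k * (\<Sum>i\<le>n. (-1) ^ i * tr l (r i) (X i))) mod (int p ^ l) = 0"
proof -
  let ?P = "int p ^ l"
  define T where "T i = tr l (r i) (mmul p (r i) (r i) (r i) (X i) (mmul p (r i) (r (Suc i)) (r i) (ds i) (d i)))" for i
  have chain: "tr l (r (Suc j)) (mmul p (r (Suc j)) (r (Suc j)) (r (Suc j)) (X (Suc j))
        (mmul p (r (Suc j)) (r j) (r (Suc j)) (d j) (ds j))) mod ?P = T j mod ?P" if "j < n" for j
  proof -
    let ?R1 = "r (Suc j)" and ?R0 = "r j"
    have c: "mmul p ?R1 ?R1 ?R0 (X (Suc j)) (d j) = mmul p ?R1 ?R0 ?R0 (d j) (X j)"
      using comm that by simp
    have "tr l ?R1 (mmul p ?R1 ?R1 ?R1 (X (Suc j)) (mmul p ?R1 ?R0 ?R1 (d j) (ds j)))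
        = tr l ?R1 (mmul p ?R1 ?R0 ?R1 (mmul p ?R1 ?R1 ?R0 (X (Suc j)) (d j)) (ds j))"
      by (simp only: mmul_assoc)
    then have "tr l ?R1 (mmul p ?R1 ?R1 ?R1 (X (Suc j)) (mmul p ?R1 ?R0 ?R1 (d j) (ds j))) mod ?P
       = tr l ?R0 (mmul p ?R0 ?R1 ?R0 (ds j) (mmul p ?R1 ?R1 ?R0 (X (Suc j)) (d j))) mod ?P"
      using tr_comm by metis
    also have "\<dots> = tr l ?R0 (mmul p ?R0 ?R0 ?R0 (mmul p ?R0 ?R1 ?R0 (ds j) (d j)) (X j)) mod ?P"
      unfolding c by (simp only: mmul_assoc)
    also have "\<dots> = T j mod ?P"
      unfolding T_def by (rule tr_comm)
    finally show ?thesis .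
  qed
  have each: "(k * tr l (r i) (X i)) mod ?P = ((if 0 < i then T (i - 1) else 0) + (if i < n then T i else 0)) mod ?P"
    if "i \<le> n" for i
  proof -
    let ?Y = "(if 0 < i then mmul p (r i) (r (i - 1)) (r i) (d (i - 1)) (ds (i - 1)) else mzero)"
    let ?Z = "(if i < n then mmul p (r i) (r (Suc i)) (r i) (ds i) (d i) else mzero)"
    have A1: "tr l (r i) (mmul p (r i) (r i) (r i) (X i) ?Y) mod ?P = (if 0 < i then T (i - 1) else 0) mod ?P"
    proof (cases i)
      case 0 then show ?thesis by (simp add: tr_mmul_mzero)
    next
      case (Suc j) then show ?thesis using chain[of j] that by simp
    qed
    have A2: "tr l (r i) (mmul p (r i) (r i) (r i) (X i) ?Z) = (if i < n then T i else 0)"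
      by (simp add: T_def tr_mmul_mzero)
    have M: "madd p (r i) (r i) ?Y ?Z = mint p (r i) k" using rel that by blast
    have "(k * tr l (r i) (X i)) mod ?P = tr l (r i) (mmul p (r i) (r i) (r i) (X i) (mint p (r i) k)) mod ?P"
      by (simp add: tr_mmul_mint)
    also have "\<dots> = (tr l (r i) (mmul p (r i) (r i) (r i) (X i) ?Y) + tr l (r i) (mmul p (r i) (r i) (r i) (X i) ?Z)) mod ?P"
      unfolding M[symmetric] by (rule tr_mmul_madd)
    also have "\<dots> = ((if 0 < i then T (i - 1) else 0) + (if i < n then T i else 0)) mod ?P"
      unfolding A2 using A1 by (rule mod_add_cong_l)
    finally show ?thesis .
  qed
  have "(k * (\<Sum>i\<le>n. (-1) ^ i * tr l (r i) (X i))) mod ?P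
      = (\<Sum>i\<le>n. (-1) ^ i * ((k * tr l (r i) (X i)) mod ?P)) mod ?P"
    by (simp add: sum_distrib_left mult.left_commute sum_mod_right)
  also have "\<dots> = (\<Sum>i\<le>n. (-1) ^ i * (((if 0 < i then T (i - 1) else 0) + (if i < n then T i else 0)) mod ?P)) mod ?P"
    using each by (intro arg_cong[where f="\<lambda>x. x mod ?P"] sum.cong) auto
  also have "\<dots> = (\<Sum>i\<le>n. (-1) ^ i * ((if 0 < i then T (i - 1) else 0) + (if i < n then T i else 0))) mod ?P"
    by (rule sum_mod_right)
  also have "\<dots> = 0" by (simp only: telescope mod_0)
  finally show ?thesis .
qed

lemma sum_split_add: "(\<Sum>i<r+R. f i) = (\<Sum>i<r. f i) + (\<Sum>i<R. f (r+i))" for f :: "nat \<Rightarrow> 'a::comm_monoid_add"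
  by (induction R) (simp_all add: add.assoc)

lemma tr_mint: "tr l m (mint p m c) = int m * (c mod int p ^ l)"
  by (simp add: tr_def mint_def zp_of_int_def)

lemma tr_mint_mmul:
  "tr l m (mmul p m m m (mint p m 1) X) mod (int p ^ l) = tr l m X mod (int p ^ l)"
  using tr_comm[of l m p m "mint p m 1" X] tr_mmul_mint[of l m p X 1] by simp

lemma tr_iso:
  assumes "giso p m S m T"
  shows "tr l m S mod (int p ^ l) = tr l m T mod (int p ^ l)"
proof -
  let ?P = "int p ^ l"
  obtain P Q where g1: "gmap p m S m T P" and g2: "gmap p m T m S Q"
    and QP: "mmul p m m m Q P = mint p m 1" and PQ: "mmul p m m m P Q = mint p m 1"
    using assms unfolding giso_def by blast
  have PS: "mmul p m m m P S = mmul p m m m T P" using g1 by (simp add: gmap_def)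
  have "tr l m S mod ?P = tr l m (mmul p m m m (mint p m 1) S) mod ?P"
    by (simp add: tr_mint_mmul)
  also have "\<dots> = tr l m (mmul p m m m Q (mmul p m m m P S)) mod ?P"
    by (simp only: QP[symmetric] mmul_assoc)
  also have "\<dots> = tr l m (mmul p m m m (mmul p m m m Q T) P) mod ?P"
    by (simp only: PS mmul_assoc)
  also have "\<dots> = tr l m (mmul p m m m P (mmul p m m m Q T)) mod ?P"
    by (rule tr_comm)
  also have "\<dots> = tr l m (mmul p m m m (mint p m 1) T) mod ?P"
    by (simp only: PQ[symmetric] mmul_assoc)
  also have "\<dots> = tr l m T mod ?P"
    by (simp add: tr_mint_mmul)
  finally show ?thesis .
qed

lemma mint_comm:
  "mmul p r' r r D (mint p r 1) = mmul p r' r' r (mint p r' 1) D"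
proof (intro ext)
  fix i j l
  show "mmul p r' r r D (mint p r 1) i j l = mmul p r' r' r (mint p r' 1) D i j l"
  proof (cases "i < r' \<and> j < r")
    case True
    have a: "(\<Sum>t<r. D i t l * mint p r 1 t j l) = D i j l * (1 mod int p ^ l)"
    proof -
      have "(\<Sum>t<r. D i t l * mint p r 1 t j l) = (\<Sum>t<r. if t = j then D i j l * (1 mod int p ^ l) else 0)"
        by (rule sum.cong) (auto simp: mint_def zp_of_int_def zzero_def True)
      then show ?thesis using True by simp
    qed
    have b: "(\<Sum>t<r'. mint p r' 1 i t l * D t j l) = D i j l * (1 mod int p ^ l)"
    proof -
      have "(\<Sum>t<r'. mint p r' 1 i t l * D t j l) = (\<Sum>t<r'. if t = i then D i j l * (1 mod int p ^ l) else 0)"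
        by (rule sum.cong) (auto simp: mint_def zp_of_int_def zzero_def True)
      then show ?thesis using True by simp
    qed
    show ?thesis using True a b by (simp add: mmul_def)
  qed (auto simp: mmul_def)
qed

lemma tr_bdiag: "tr l (sum_list (map fst L)) (bdiag L) = sum_list (map (\<lambda>(r, M). tr l r M) L)"
proof (induction L)
  case Nil then show ?case by (simp add: tr_def)
next
  case (Cons x L)
  obtain r M where x: "x = (r, M)" by force
  have "tr l (sum_list (map fst (x # L))) (bdiag (x # L))
     = (\<Sum>i<r. bdiag ((r, M) # L) i i l) + (\<Sum>i<sum_list (map fst L). bdiag ((r, M) # L) (r + i) (r + i) l)"
    by (simp add: x tr_def sum_split_add)
  also have "\<dots> = tr l r M + tr l (sum_list (map fst L)) (bdiag L)"
    by (simp add: tr_def)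
  finally show ?case using Cons by (simp add: x)
qed

lemma tr_triv: "tr l 1 (triv_mat p) = 1 mod int p ^ l"
  by (simp add: tr_def triv_mat_def mint_def zp_of_int_def)

lemma tr_reg: assumes "2 \<le> p" shows "tr l p (reg_mat p) = 0"
proof -
  have "i \<noteq> (i + 1) mod p" if "i < p" for i
  proof (cases "i + 1 < p")
    case False then have "i + 1 = p" using that by simp
    then show ?thesis using assms by simp
  qed simp
  then show ?thesis by (simp add: tr_def reg_mat_def zzero_def)
qed

lemma tr_aug: assumes "2 \<le> p" shows "tr l (p - 1) (aug_mat p) = (-1) mod int p ^ l"
proof -
  have "tr l (p - 1) (aug_mat p) = (\<Sum>i<p - 1. if i = p - 2 then (-1) mod int p ^ l else 0)"
    unfolding tr_def by (rule sum.cong) (auto simp: aug_mat_def zzero_def zp_of_int_def)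
  also have "\<dots> = (-1) mod int p ^ l" using assms by simp
  finally show ?thesis .
qed

lemma mod_pm1: "(x * (1 mod P) + y * ((-1) mod P)) mod P = (x - y) mod (P::int)"
proof -
  have "(x * (1 mod P) + y * ((-1) mod P)) mod P = ((x * (1 mod P)) mod P + (y * ((-1) mod P)) mod P) mod P"
    by (rule mod_add_eq[symmetric])
  also have "\<dots> = ((x * 1) mod P + (y * (-1)) mod P) mod P" by (simp only: mod_mult_right_eq)
  also have "\<dots> = (x + (- y)) mod P" by (simp add: mod_add_eq)
  finally show ?thesis by simp
qed

lemma tr_std:
  assumes "2 \<le> p"
  shows "tr l (a + p * b + (p - 1) * c) (std_sum p a b c) mod int p ^ l = (int a - int c) mod int p ^ l"
proof -
  let ?L = "replicate a (1, triv_mat p) @ replicate b (p, reg_mat p) @ replicate c (p - 1, aug_mat p)"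
  have s: "sum_list (map fst ?L) = a + p * b + (p - 1) * c"
    by (simp add: sum_list_replicate)
  have "tr l (a + p * b + (p - 1) * c) (std_sum p a b c) = sum_list (map (\<lambda>(r, M). tr l r M) ?L)"
    unfolding std_sum_def s[symmetric] by (rule tr_bdiag)
  also have "\<dots> = int a * (1 mod int p ^ l) + int c * ((-1) mod int p ^ l)"
    using assms by (simp add: tr_triv[simplified] tr_reg tr_aug[OF assms, simplified] sum_list_replicate)
  finally show ?thesis using mod_pm1[of "int a" "int p ^ l" "int c"] by simp
qed

definition V :: "nat \<Rightarrow> nat \<Rightarrow> (nat \<Rightarrow> int) set" where
  "V p r = {v. \<forall>j. (j < r \<longrightarrow> 0 \<le> v j \<and> v j < int p) \<and> (\<not> j < r \<longrightarrow> v j = 0)}"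

definition ap :: "nat \<Rightarrow> nat \<Rightarrow> nat \<Rightarrow> zpmat \<Rightarrow> (nat \<Rightarrow> int) \<Rightarrow> nat \<Rightarrow> int" where
  "ap p m r M v = (\<lambda>i. if i < m then (\<Sum>j<r. M i j 1 * v j) mod int p else 0)"

definition vsc :: "nat \<Rightarrow> int \<Rightarrow> (nat \<Rightarrow> int) \<Rightarrow> nat \<Rightarrow> int" where
  "vsc p c v = (\<lambda>j. (c * v j) mod int p)"

definition vadd :: "nat \<Rightarrow> (nat \<Rightarrow> int) \<Rightarrow> (nat \<Rightarrow> int) \<Rightarrow> nat \<Rightarrow> int" where
  "vadd p u w = (\<lambda>j. (u j + w j) mod int p)"

definition zv :: "nat \<Rightarrow> int" where "zv = (\<lambda>_. 0)"

definition Fix :: "nat \<Rightarrow> nat \<Rightarrow> zpmat \<Rightarrow> (nat \<Rightarrow> int) set" where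
  "Fix p r S = {v \<in> V p r. ap p r r S v = v}"

lemma finite_V: "finite (V p r)"
proof -
  have e: "V p r = {v. \<forall>j. (j \<in> {..<r} \<longrightarrow> v j \<in> {0..<int p}) \<and> (j \<notin> {..<r} \<longrightarrow> v j = 0)}"
    by (auto simp: V_def)
  show ?thesis unfolding e by (rule finite_set_of_finite_funs) auto
qed

lemma finite_Fix: "finite (Fix p r S)"
  using finite_V[of p r] unfolding Fix_def by (rule finite_subset[rotated]) auto

lemma ap_V: "0 < p \<Longrightarrow> ap p m r M v \<in> V p m"
  by (simp add: ap_def V_def)

lemma zv_V: "0 < p \<Longrightarrow> zv \<in> V p r"
  by (simp add: zv_def V_def)

lemma V_mod: "v \<in> V p r \<Longrightarrow> v j mod int p = v j"
  by (cases "j < r") (auto simp: V_def)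

lemma ap_mmul: "ap p m r (mmul p m k r M N) v = ap p m k M (ap p k r N v)"
proof (intro ext)
  fix i
  show "ap p m r (mmul p m k r M N) v i = ap p m k M (ap p k r N v) i"
  proof (cases "i < m")
    case True
    have "ap p m r (mmul p m k r M N) v i = (\<Sum>j<r. ((\<Sum>t<k. M i t 1 * N t j 1) mod int p) * v j) mod int p"
    proof -
      have e: "\<And>j. j < r \<Longrightarrow> mmul p m k r M N i j 1 = (\<Sum>t<k. M i t 1 * N t j 1) mod int p"
        using True by (simp add: mmul_def)
      show ?thesis using True by (auto simp: ap_def e[simplified] intro!: arg_cong[where f="\<lambda>x. x mod int p"] sum.cong)
    qed
    also have "\<dots> = (\<Sum>j<r. (\<Sum>t<k. M i t 1 * N t j 1) * v j) mod int p"
      by (rule sum_mod_left)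
    also have "\<dots> = (\<Sum>t<k. M i t 1 * (\<Sum>j<r. N t j 1 * v j)) mod int p"
      by (simp add: sum_distrib_left sum_distrib_right mult.assoc sum.swap[of _ "{..<r}"])
    also have "\<dots> = (\<Sum>t<k. M i t 1 * ((\<Sum>j<r. N t j 1 * v j) mod int p)) mod int p"
      by (rule sum_mod_right[symmetric])
    also have "\<dots> = ap p m k M (ap p k r N v) i"
      using True by (simp add: ap_def)
    finally show ?thesis .
  qed (simp add: ap_def)
qed

lemma ap_mzero: "ap p m r mzero v = zv"
  by (rule ext) (simp add: ap_def mzero_def zzero_def zv_def)

lemma ap_zv: "ap p m r M zv = zv"
  by (rule ext) (simp add: ap_def zv_def)

lemma vsc_zv: "vsc p c zv = zv"
  by (simp add: vsc_def zv_def)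

lemma ap_vsc: "ap p m r M (vsc p c v) = vsc p c (ap p m r M v)"
proof (intro ext)
  fix i
  show "ap p m r M (vsc p c v) i = vsc p c (ap p m r M v) i"
  proof (cases "i < m")
    case True
    have "ap p m r M (vsc p c v) i = (\<Sum>j<r. M i j 1 * ((c * v j) mod int p)) mod int p"
      using True by (simp add: ap_def vsc_def)
    also have "\<dots> = (\<Sum>j<r. M i j 1 * (c * v j)) mod int p" by (rule sum_mod_right)
    also have "\<dots> = (c * (\<Sum>j<r. M i j 1 * v j)) mod int p"
      by (simp add: sum_distrib_left mult.left_commute)
    also have "\<dots> = vsc p c (ap p m r M v) i"
      using True by (simp add: ap_def vsc_def mod_mult_right_eq)
    finally show ?thesis .
  qed (simp add: ap_def vsc_def)
qed

lemma ap_vadd: "ap p m r M (vadd p u w) = vadd p (ap p m r M u) (ap p m r M w)"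
proof (intro ext)
  fix i
  show "ap p m r M (vadd p u w) i = vadd p (ap p m r M u) (ap p m r M w) i"
  proof (cases "i < m")
    case True
    have "ap p m r M (vadd p u w) i = (\<Sum>j<r. M i j 1 * ((u j + w j) mod int p)) mod int p"
      using True by (simp add: ap_def vadd_def)
    also have "\<dots> = (\<Sum>j<r. M i j 1 * (u j + w j)) mod int p" by (rule sum_mod_right)
    also have "\<dots> = ((\<Sum>j<r. M i j 1 * u j) + (\<Sum>j<r. M i j 1 * w j)) mod int p"
      by (simp add: distrib_left sum.distrib)
    also have "\<dots> = vadd p (ap p m r M u) (ap p m r M w) i"
      using True by (simp add: ap_def vadd_def mod_add_eq)
    finally show ?thesis .
  qed (simp add: ap_def vadd_def)
qed

lemma ap_mint: "v \<in> V p m \<Longrightarrow> ap p m m (mint p m c) v = vsc p c v"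
proof (intro ext)
  fix i assume v: "v \<in> V p m"
  show "ap p m m (mint p m c) v i = vsc p c v i"
  proof (cases "i < m")
    case True
    have "(\<Sum>j<m. mint p m c i j 1 * v j) = (\<Sum>j<m. if j = i then (c mod int p) * v i else 0)"
      by (rule sum.cong) (auto simp: mint_def zp_of_int_def zzero_def True)
    then have "ap p m m (mint p m c) v i = ((c mod int p) * v i) mod int p"
      using True by (simp add: ap_def)
    then show ?thesis by (simp add: vsc_def mod_mult_left_eq)
  next
    case False then show ?thesis using v by (simp add: ap_def vsc_def V_def)
  qed
qed

lemma ap_madd: "ap p m r (madd p m r A B) v = vadd p (ap p m r A v) (ap p m r B v)"
proof (intro ext)
  fix i
  show "ap p m r (madd p m r A B) v i = vadd p (ap p m r A v) (ap p m r B v) i"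
  proof (cases "i < m")
    case True
    have "ap p m r (madd p m r A B) v i = (\<Sum>j<r. ((A i j 1 + B i j 1) mod int p) * v j) mod int p"
    proof -
      have e: "\<And>j. j < r \<Longrightarrow> madd p m r A B i j 1 = (A i j 1 + B i j 1) mod int p"
        using True by (simp add: madd_def)
      show ?thesis using True by (auto simp: ap_def e[simplified] intro!: arg_cong[where f="\<lambda>x. x mod int p"] sum.cong)
    qed
    also have "\<dots> = (\<Sum>j<r. (A i j 1 + B i j 1) * v j) mod int p" by (rule sum_mod_left)
    also have "\<dots> = ((\<Sum>j<r. A i j 1 * v j) + (\<Sum>j<r. B i j 1 * v j)) mod int p"
      by (simp add: distrib_right sum.distrib)
    also have "\<dots> = vadd p (ap p m r A v) (ap p m r B v) i"
      using True by (simp add: ap_def vadd_def mod_add_eq)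
    finally show ?thesis .
  qed (simp add: ap_def vadd_def)
qed

lemma vsc_V: "0 < p \<Longrightarrow> v \<in> V p r \<Longrightarrow> vsc p c v \<in> V p r"
  by (auto simp: vsc_def V_def)

lemma vadd_V: "0 < p \<Longrightarrow> u \<in> V p r \<Longrightarrow> w \<in> V p r \<Longrightarrow> vadd p u w \<in> V p r"
  by (auto simp: vadd_def V_def)

lemma vsc_vsc: "vsc p a (vsc p b v) = vsc p (a * b) v"
  by (simp add: vsc_def mod_mult_right_eq mult.assoc)

lemma vsc_inv: "(a * b) mod int p = 1 \<Longrightarrow> v \<in> V p r \<Longrightarrow> vsc p a (vsc p b v) = v"
proof (intro ext)
  fix j assume ab: "(a * b) mod int p = 1" and v: "v \<in> V p r"
  have "vsc p a (vsc p b v) j = ((a * b) * v j) mod int p" by (simp add: vsc_def mod_mult_right_eq mult.assoc)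
  also have "\<dots> = (((a * b) mod int p) * v j) mod int p" by (simp add: mod_mult_left_eq)
  also have "\<dots> = v j" using ab V_mod[OF v] by simp
  finally show "vsc p a (vsc p b v) j = v j" .
qed

lemma vadd_zv: "v \<in> V p r \<Longrightarrow> vadd p v zv = v"
  by (auto simp: vadd_def zv_def V_mod)

lemma vadd_zv2: "v \<in> V p r \<Longrightarrow> vadd p zv v = v"
  by (auto simp: vadd_def zv_def V_mod)

lemma vsc_vadd: "vadd p (vsc p c u) (vsc p c w) = vsc p c (vadd p u w)"
  by (auto simp: vadd_def vsc_def mod_add_eq mod_mult_right_eq distrib_left)

lemma fix_telescope:
  fixes p n :: nat and k k' :: int and r :: "nat \<Rightarrow> nat" and S d ds :: "nat \<Rightarrow> zpmat"
  assumes p: "0 < p" and kk: "(k' * k) mod int p = 1"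
    and gd: "\<forall>i<n. gmap p (r i) (S i) (r (Suc i)) (S (Suc i)) (d i)"
    and gds: "\<forall>i<n. gmap p (r (Suc i)) (S (Suc i)) (r i) (S i) (ds i)"
    and dd: "\<forall>i. Suc i < n \<longrightarrow> mmul p (r (Suc (Suc i))) (r (Suc i)) (r i) (d (Suc i)) (d i) = mzero"
    and dsds: "\<forall>i. Suc i < n \<longrightarrow> mmul p (r i) (r (Suc i)) (r (Suc (Suc i))) (ds i) (ds (Suc i)) = mzero"
    and rel: "\<forall>i\<le>n. madd p (r i) (r i)
            (if 0 < i then mmul p (r i) (r (i - 1)) (r i) (d (i - 1)) (ds (i - 1)) else mzero)
            (if i < n then mmul p (r i) (r (Suc i)) (r i) (ds i) (d i) else mzero)
          = mint p (r i) k"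
  shows "(\<Sum>i\<le>n. (-1) ^ i * ln (real (card (Fix p (r i) (S i))))) = 0"
proof -
  define apS where "apS i = ap p (r i) (r i) (S i)" for i
  define D where "D i = ap p (r (Suc i)) (r i) (d i)" for i
  define E where "E i = ap p (r i) (r (Suc i)) (ds i)" for i
  define P where "P i v = (case i of 0 \<Rightarrow> zv | Suc j \<Rightarrow> D j (E j v))" for i v
  define Q where "Q i v = (if i < n then E i (D i v) else zv)" for i v
  define F where "F i = Fix p (r i) (S i)" for i
  define U where "U i = {v \<in> F i. Q i v = zv}" for i
  define W where "W i = {v \<in> F i. P i v = zv}" for i
  have F_iff: "v \<in> F i \<longleftrightarrow> v \<in> V p (r i) \<and> apS i v = v" for i v
    by (simp add: F_def Fix_def apS_def)
  have cD: "D i (apS i v) = apS (Suc i) (D i v)" if "i < n" for i v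
  proof -
    have "mmul p (r (Suc i)) (r i) (r i) (d i) (S i) = mmul p (r (Suc i)) (r (Suc i)) (r i) (S (Suc i)) (d i)"
      using gd that by (simp add: gmap_def)
    then have "ap p (r (Suc i)) (r i) (mmul p (r (Suc i)) (r i) (r i) (d i) (S i)) v
       = ap p (r (Suc i)) (r i) (mmul p (r (Suc i)) (r (Suc i)) (r i) (S (Suc i)) (d i)) v" by simp
    then show ?thesis by (simp add: ap_mmul D_def apS_def)
  qed
  have cE: "E i (apS (Suc i) v) = apS i (E i v)" if "i < n" for i v
  proof -
    have "mmul p (r i) (r (Suc i)) (r (Suc i)) (ds i) (S (Suc i)) = mmul p (r i) (r i) (r (Suc i)) (S i) (ds i)"
      using gds that by (simp add: gmap_def)
    then have "ap p (r i) (r (Suc i)) (mmul p (r i) (r (Suc i)) (r (Suc i)) (ds i) (S (Suc i))) v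
       = ap p (r i) (r (Suc i)) (mmul p (r i) (r i) (r (Suc i)) (S i) (ds i)) v" by simp
    then show ?thesis by (simp add: ap_mmul E_def apS_def)
  qed
  have DD: "D (Suc i) (D i v) = zv" if "Suc i < n" for i v
  proof -
    have "ap p (r (Suc (Suc i))) (r i) (mmul p (r (Suc (Suc i))) (r (Suc i)) (r i) (d (Suc i)) (d i)) v = zv"
      using dd that by (simp add: ap_mzero)
    then show ?thesis by (simp add: ap_mmul D_def)
  qed
  have EE: "E i (E (Suc i) v) = zv" if "Suc i < n" for i v
  proof -
    have "ap p (r i) (r (Suc (Suc i))) (mmul p (r i) (r (Suc i)) (r (Suc (Suc i))) (ds i) (ds (Suc i))) v = zv"
      using dsds that by (simp add: ap_mzero)
    then show ?thesis by (simp add: ap_mmul E_def)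
  qed
  have R: "vadd p (P i v) (Q i v) = vsc p k v" if "i \<le> n" "v \<in> V p (r i)" for i v
  proof -
    have m: "madd p (r i) (r i)
            (if 0 < i then mmul p (r i) (r (i - 1)) (r i) (d (i - 1)) (ds (i - 1)) else mzero)
            (if i < n then mmul p (r i) (r (Suc i)) (r i) (ds i) (d i) else mzero)
          = mint p (r i) k" using rel that by blast
    have "ap p (r i) (r i) (mint p (r i) k) v = vsc p k v" using that by (simp add: ap_mint)
    moreover have "ap p (r i) (r i) (if 0 < i then mmul p (r i) (r (i - 1)) (r i) (d (i - 1)) (ds (i - 1)) else mzero) v = P i v"
      by (cases i) (simp_all add: P_def ap_mzero ap_mmul D_def E_def)
    moreover have "ap p (r i) (r i) (if i < n then mmul p (r i) (r (Suc i)) (r i) (ds i) (d i) else mzero) v = Q i v"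
      by (simp add: Q_def ap_mzero ap_mmul D_def E_def)
    ultimately show ?thesis using m by (metis ap_madd)
  qed
  have Dsc: "D i (vsc p c v) = vsc p c (D i v)" "E i (vsc p c v) = vsc p c (E i v)"
     "apS i (vsc p c v) = vsc p c (apS i v)" for i c v
    by (simp_all add: D_def E_def apS_def ap_vsc)
  have Dadd: "D i (vadd p u v) = vadd p (D i u) (D i v)" "E i (vadd p u v) = vadd p (E i u) (E i v)"
     "apS i (vadd p u v) = vadd p (apS i u) (apS i v)" for i u v
    by (simp_all add: D_def E_def apS_def ap_vadd)
  have Dz: "D i zv = zv" "E i zv = zv" "apS i zv = zv" for i
    by (simp_all add: D_def E_def apS_def ap_zv)
  have DV: "D i v \<in> V p (r (Suc i))" "E i v \<in> V p (r i)" "apS i v \<in> V p (r i)" for i v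
    using p by (simp_all add: D_def E_def apS_def ap_V)
  have PV: "P i v \<in> V p (r i)" for i v
    by (cases i) (simp_all add: P_def zv_V p DV)
  have QV: "Q i v \<in> V p (r i)" for i v
    by (simp add: Q_def zv_V p DV)
  have Psc: "P i (vsc p c v) = vsc p c (P i v)" for i c v
    by (cases i) (simp_all add: P_def Dsc vsc_zv)
  have Qsc: "Q i (vsc p c v) = vsc p c (Q i v)" for i c v
    by (simp add: Q_def Dsc vsc_zv)
  have Padd: "P i (vadd p u v) = vadd p (P i u) (P i v)" for i u v
    by (cases i) (simp_all add: P_def Dadd vadd_zv zv_V p)
  have Qadd: "Q i (vadd p u v) = vadd p (Q i u) (Q i v)" for i u v
    by (simp add: Q_def Dadd vadd_zv zv_V p)
  have Pz: "P i zv = zv" "Q i zv = zv" for i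
    by (cases i) (simp_all add: P_def Q_def Dz)
  have PS: "apS i (P i v) = P i (apS i v)" if "i \<le> n" for i v
  proof (cases i)
    case 0 then show ?thesis by (simp add: P_def Dz)
  next
    case (Suc j)
    then have "j < n" using that by simp
    then show ?thesis using Suc by (simp add: P_def cD cE)
  qed
  have QS: "apS i (Q i v) = Q i (apS i v)" for i v
    by (simp add: Q_def Dz cD cE)
  have QP: "Q i (P i v) = zv" if "i \<le> n" for i v
  proof (cases i)
    case 0 then show ?thesis by (simp add: P_def Pz)
  next
    case (Suc j)
    show ?thesis
    proof (cases "Suc j < n")
      case True then show ?thesis using Suc by (simp add: P_def Q_def DD Dz)
    next
      case False then show ?thesis using Suc by (simp add: Q_def)
    qed
  qed
  have PQ: "P i (Q i v) = zv" for i v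
  proof (cases i)
    case 0 then show ?thesis by (simp add: P_def)
  next
    case (Suc j)
    show ?thesis
    proof (cases "Suc j < n")
      case True then show ?thesis using Suc by (simp add: P_def Q_def EE Dz)
    next
      case False then show ?thesis using Suc by (simp add: Q_def Pz)
    qed
  qed
  have kinvU: "vsc p k' (P i u) = u" if "i \<le> n" "u \<in> U i" for i u
  proof -
    have uV: "u \<in> V p (r i)" and Qu: "Q i u = zv" using that by (auto simp: U_def F_iff)
    have "P i u = vsc p k u" using R[OF that(1) uV] Qu vadd_zv[OF PV] by simp
    then show ?thesis using vsc_inv[OF kk uV] by simp
  qed
  have kinvW: "vsc p k' (Q i w) = w" if "i \<le> n" "w \<in> W i" for i w
  proof -
    have wV: "w \<in> V p (r i)" and Pw: "P i w = zv" using that by (auto simp: W_def F_iff)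
    have "Q i w = vsc p k w" using R[OF that(1) wV] Pw vadd_zv2[OF QV] by simp
    then show ?thesis using vsc_inv[OF kk wV] by simp
  qed
  have zvF: "zv \<in> F i" for i by (simp add: F_iff zv_V p Dz)
  have zvU: "zv \<in> U i" and zvW: "zv \<in> W i" for i by (simp_all add: U_def W_def zvF Pz)
  have finU: "finite (U i)" and finW: "finite (W i)" for i
    by (auto simp: U_def W_def F_def intro: finite_subset[OF _ finite_Fix])
  have step1: "card (F i) = card (U i) * card (W i)" if "i \<le> n" for i
  proof -
    have "bij_betw (\<lambda>(u, w). vadd p u w) (U i \<times> W i) (F i)"
      unfolding bij_betw_def
    proof (intro conjI)
      show "inj_on (\<lambda>(u, w). vadd p u w) (U i \<times> W i)"
      proof (rule inj_onI, clarify)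
        fix u w u' w' assume u: "u \<in> U i" and w: "w \<in> W i" and u': "u' \<in> U i" and w': "w' \<in> W i"
          and eq: "vadd p u w = vadd p u' w'"
        have Pw: "P i w = zv" "P i w' = zv" and Qu: "Q i u = zv" "Q i u' = zv"
          using u w u' w' by (auto simp: U_def W_def)
        have "u = vsc p k' (P i (vadd p u w))"
          using kinvU[OF that u] by (simp add: Padd Pw vadd_zv[OF PV])
        also have "\<dots> = u'" unfolding eq
          using kinvU[OF that u'] by (simp add: Padd Pw vadd_zv[OF PV])
        finally have 1: "u = u'" .
        have "w = vsc p k' (Q i (vadd p u w))"
          using kinvW[OF that w] by (simp add: Qadd Qu vadd_zv2[OF QV])
        also have "\<dots> = w'" unfolding eq
          using kinvW[OF that w'] by (simp add: Qadd Qu vadd_zv2[OF QV])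
        finally show "u = u' \<and> w = w'" using 1 by simp
      qed
      show "(\<lambda>(u, w). vadd p u w) ` (U i \<times> W i) = F i"
      proof (intro equalityI subsetI)
        fix x assume "x \<in> (\<lambda>(u, w). vadd p u w) ` (U i \<times> W i)"
        then obtain u w where u: "u \<in> U i" and w: "w \<in> W i" and x: "x = vadd p u w" by auto
        have "u \<in> F i" "w \<in> F i" using u w by (auto simp: U_def W_def)
        then show "x \<in> F i" unfolding x F_iff using p by (auto simp: vadd_V Dadd)
      next
        fix v assume v: "v \<in> F i"
        have vV: "v \<in> V p (r i)" and vS: "apS i v = v" using v by (auto simp: F_iff)
        let ?u = "vsc p k' (P i v)" and ?w = "vsc p k' (Q i v)"
        have "?u \<in> U i" unfolding U_def F_iff
          using p PV by (simp add: vsc_V Dsc PS[OF that] vS Qsc QP[OF that] vsc_zv)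
        moreover have "?w \<in> W i" unfolding W_def F_iff
          using p QV by (simp add: vsc_V Dsc QS vS Psc PQ vsc_zv)
        moreover have "v = vadd p ?u ?w"
          using vsc_inv[OF kk vV] by (simp add: vsc_vadd R[OF that vV])
        ultimately show "v \<in> (\<lambda>(u, w). vadd p u w) ` (U i \<times> W i)" by force
      qed
    qed
    then have "card (U i \<times> W i) = card (F i)" by (rule bij_betw_same_card)
    then show ?thesis by (simp add: card_cartesian_product)
  qed
  have step2: "card (W i) = card (U (Suc i))" if "i < n" for i
  proof -
    have "bij_betw (D i) (W i) (U (Suc i))"
      unfolding bij_betw_def
    proof (intro conjI)
      show "inj_on (D i) (W i)"
      proof (rule inj_onI)
        fix w w' assume w: "w \<in> W i" and w': "w' \<in> W i" and eq: "D i w = D i w'"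
        have "w = vsc p k' (E i (D i w))" using kinvW[of i w] w that by (simp add: Q_def)
        also have "\<dots> = w'" using kinvW[of i w'] w' that eq by (simp add: Q_def)
        finally show "w = w'" .
      qed
      show "D i ` W i = U (Suc i)"
      proof (intro equalityI subsetI)
        fix x assume "x \<in> D i ` W i"
        then obtain w where w: "w \<in> W i" and x: "x = D i w" by auto
        have wF: "w \<in> F i" using w by (simp add: W_def)
        then have "apS (Suc i) x = x" unfolding x using that by (simp add: F_iff cD[symmetric])
        moreover have "Q (Suc i) x = zv" unfolding x Q_def by (simp add: DD Dz)
        ultimately show "x \<in> U (Suc i)" by (simp add: U_def F_iff DV x)
      next
        fix u assume u: "u \<in> U (Suc i)"
        have uF: "u \<in> V p (r (Suc i))" "apS (Suc i) u = u" using u by (auto simp: U_def F_iff)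
        let ?w = "vsc p k' (E i u)"
        have "?w \<in> V p (r i)" using p DV by (simp add: vsc_V)
        moreover have "apS i ?w = ?w" using uF that by (simp add: Dsc cE[symmetric])
        moreover have "P i ?w = zv"
        proof (cases i)
          case 0 then show ?thesis by (simp add: P_def)
        next
          case (Suc j) then show ?thesis using that by (simp add: P_def Dsc EE Dz vsc_zv)
        qed
        ultimately have wW: "?w \<in> W i" by (simp add: W_def F_iff)
        have "D i ?w = vsc p k' (P (Suc i) u)" by (simp add: Dsc P_def)
        also have "\<dots> = u" using kinvU[of "Suc i" u] u that by simp
        finally show "u \<in> D i ` W i" using wW by force
      qed
    qed
    then show ?thesis by (rule bij_betw_same_card)
  qed
  have U0: "U 0 = {zv}"
  proof (intro equalityI subsetI)
    fix v assume v: "v \<in> U 0"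
    show "v \<in> {zv}" using kinvU[of 0 v] v by (simp add: P_def vsc_zv)
  qed (simp add: zvU)
  have Wn: "W n = {zv}"
  proof (intro equalityI subsetI)
    fix v assume v: "v \<in> W n"
    show "v \<in> {zv}" using kinvW[of n v] v by (simp add: Q_def vsc_zv)
  qed (simp add: zvW)
  have cardpos: "0 < card (U i)" "0 < card (W i)" for i
    using finU[of i] finW[of i] zvU[of i] zvW[of i] by (auto simp: card_gt_0_iff)
  define x where "x i = ln (real (card (W i)))" for i
  have lnF: "ln (real (card (F i))) = (if 0 < i then x (i - 1) else 0) + (if i < n then x i else 0)"
    if "i \<le> n" for i
  proof -
    have "ln (real (card (F i))) = ln (real (card (U i))) + ln (real (card (W i)))"
      using step1[OF that] cardpos[of i] by (simp add: ln_mult)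
    moreover have "ln (real (card (U i))) = (if 0 < i then x (i - 1) else 0)"
    proof (cases i)
      case 0 then show ?thesis by (simp add: U0)
    next
      case (Suc j) then show ?thesis using step2[of j] that by (simp add: x_def)
    qed
    moreover have "ln (real (card (W i))) = (if i < n then x i else 0)"
      using that Wn by (auto simp: x_def)
    ultimately show ?thesis by simp
  qed
  have "(\<Sum>i\<le>n. (-1) ^ i * ln (real (card (Fix p (r i) (S i)))))
     = (\<Sum>i\<le>n. (-1) ^ i * ((if 0 < i then x (i - 1) else 0) + (if i < n then x i else 0)))"
    by (rule sum.cong) (simp_all add: lnF[unfolded F_def])
  also have "\<dots> = 0" by (rule telescope)
  finally show ?thesis .
qed

lemma vsc_one: "v \<in> V p r \<Longrightarrow> vsc p 1 v = v"
  by (auto simp: vsc_def V_mod)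

lemma Fix_iso:
  assumes p: "0 < p" and g: "giso p m S m T"
  shows "card (Fix p m S) = card (Fix p m T)"
proof -
  obtain P Q where g1: "gmap p m S m T P" and g2: "gmap p m T m S Q"
    and QP: "mmul p m m m Q P = mint p m 1" and PQ: "mmul p m m m P Q = mint p m 1"
    using g unfolding giso_def by blast
  have PS: "mmul p m m m P S = mmul p m m m T P" using g1 by (simp add: gmap_def)
  have QT: "mmul p m m m Q T = mmul p m m m S Q" using g2 by (simp add: gmap_def)
  have "bij_betw (ap p m m P) (Fix p m S) (Fix p m T)"
  proof (rule bij_betw_byWitness[where f'="ap p m m Q"])
    show "\<forall>a\<in>Fix p m S. ap p m m Q (ap p m m P a) = a"
      by (auto simp: Fix_def ap_mmul[symmetric] QP ap_mint vsc_one)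
    show "\<forall>a\<in>Fix p m T. ap p m m P (ap p m m Q a) = a"
      by (auto simp: Fix_def ap_mmul[symmetric] PQ ap_mint vsc_one)
    show "ap p m m P ` Fix p m S \<subseteq> Fix p m T"
    proof
      fix x assume "x \<in> ap p m m P ` Fix p m S"
      then obtain v where v: "v \<in> Fix p m S" and x: "x = ap p m m P v" by auto
      have "ap p m m T x = ap p m m P (ap p m m S v)"
        unfolding x by (simp add: ap_mmul[symmetric] PS)
      then show "x \<in> Fix p m T" using v p by (simp add: Fix_def ap_V x)
    qed
    show "ap p m m Q ` Fix p m T \<subseteq> Fix p m S"
    proof
      fix x assume "x \<in> ap p m m Q ` Fix p m T"
      then obtain v where v: "v \<in> Fix p m T" and x: "x = ap p m m Q v" by auto
      have "ap p m m S x = ap p m m Q (ap p m m T v)"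
        unfolding x by (simp add: ap_mmul[symmetric] QT)
      then show "x \<in> Fix p m S" using v p by (simp add: Fix_def ap_V x)
    qed
  qed
  then show ?thesis by (rule bij_betw_same_card)
qed

lemma ap_cong_low: assumes "\<And>j. j < r \<Longrightarrow> v j = v' j" shows "ap p m r M v = ap p m r M v'"
proof -
  have e: "\<And>i. (\<Sum>j<r. M i j 1 * v j) = (\<Sum>j<r. M i j 1 * v' j)"
    by (rule sum.cong) (simp_all add: assms)
  show ?thesis unfolding ap_def by (rule ext) (simp only: e)
qed

lemma ap_bdiag:
  "ap p (r + R) (r + R) (bdiag ((r, M) # Ms)) v
   = (\<lambda>i. if i < r then ap p r r M v i else if i < r + R then ap p R R (bdiag Ms) (\<lambda>j. v (r + j)) (i - r) else 0)"
proof (intro ext)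
  fix i
  let ?B = "bdiag ((r, M) # Ms)"
  show "ap p (r + R) (r + R) ?B v i = (if i < r then ap p r r M v i else if i < r + R then ap p R R (bdiag Ms) (\<lambda>j. v (r + j)) (i - r) else 0)"
  proof (cases "i < r + R")
    case True
    have s: "(\<Sum>j<r + R. ?B i j 1 * v j) = (\<Sum>j<r. ?B i j 1 * v j) + (\<Sum>j<R. ?B i (r + j) 1 * v (r + j))"
      by (rule sum_split_add)
    show ?thesis
    proof (cases "i < r")
      case True
      have "(\<Sum>j<R. ?B i (r + j) 1 * v (r + j)) = 0" using True by (simp add: zzero_def)
      moreover have "(\<Sum>j<r. ?B i j 1 * v j) = (\<Sum>j<r. M i j 1 * v j)" using True by simp
      ultimately show ?thesis using True s by (simp add: ap_def)
    next
      case False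
      have "(\<Sum>j<r. ?B i j 1 * v j) = 0" using False by (simp add: zzero_def)
      moreover have "(\<Sum>j<R. ?B i (r + j) 1 * v (r + j)) = (\<Sum>j<R. bdiag Ms (i - r) j 1 * v (r + j))"
        using False by simp
      ultimately show ?thesis using False True s by (simp add: ap_def)
    qed
  qed (simp add: ap_def)
qed

lemma card_Fix_cons:
  assumes p: "0 < p"
  shows "card (Fix p (r + R) (bdiag ((r, M) # Ms))) = card (Fix p r M) * card (Fix p R (bdiag Ms))"
proof -
  let ?g = "\<lambda>(u, w). (\<lambda>i. if i < r then u i else w (i - r)) :: nat \<Rightarrow> int"
  let ?h = "\<lambda>v. ((\<lambda>i. if i < r then v i else 0) :: nat \<Rightarrow> int, \<lambda>j. v (r + j))"
  let ?B = "bdiag ((r, M) # Ms)"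
  have "bij_betw ?g (Fix p r M \<times> Fix p R (bdiag Ms)) (Fix p (r + R) ?B)"
  proof (rule bij_betw_byWitness[where f'="?h"])
    show "\<forall>a\<in>Fix p r M \<times> Fix p R (bdiag Ms). ?h (?g a) = a"
      by (auto simp: Fix_def V_def fun_eq_iff)
    show "\<forall>a\<in>Fix p (r + R) ?B. ?g (?h a) = a"
      by (auto simp: fun_eq_iff)
    show "?g ` (Fix p r M \<times> Fix p R (bdiag Ms)) \<subseteq> Fix p (r + R) ?B"
    proof clarify
      fix u w assume u: "u \<in> Fix p r M" and w: "w \<in> Fix p R (bdiag Ms)"
      have uV: "u \<in> V p r" and uf: "ap p r r M u = u" and wV: "w \<in> V p R" and wf: "ap p R R (bdiag Ms) w = w"
        using u w by (auto simp: Fix_def)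
      let ?v = "\<lambda>i. if i < r then u i else w (i - r)"
      have a1: "ap p r r M ?v = ap p r r M u" by (rule ap_cong_low) simp
      have a2: "(\<lambda>j. ?v (r + j)) = w" by auto
      have vV: "?v \<in> V p (r + R)" using uV wV by (auto simp: V_def)
      have "ap p (r + R) (r + R) ?B ?v = ?v"
        unfolding ap_bdiag a1 a2 uf wf using wV by (auto simp: V_def fun_eq_iff)
      then show "?v \<in> Fix p (r + R) ?B" using vV by (simp add: Fix_def)
    qed
    show "?h ` Fix p (r + R) ?B \<subseteq> Fix p r M \<times> Fix p R (bdiag Ms)"
    proof clarify
      fix v assume v: "v \<in> Fix p (r + R) ?B"
      have vV: "v \<in> V p (r + R)" and vf0: "ap p (r + R) (r + R) ?B v = v" using v by (auto simp: Fix_def)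
      note vf = vf0[unfolded ap_bdiag]
      let ?u = "\<lambda>i. if i < r then v i else 0"
      have a1: "ap p r r M ?u = ap p r r M v" by (rule ap_cong_low) simp
      have "ap p r r M ?u = ?u"
      proof (intro ext)
        fix i show "ap p r r M ?u i = ?u i"
        proof (cases "i < r")
          case True
          have "v i = ap p r r M v i" using fun_cong[OF vf, of i] True by simp
          then show ?thesis using True a1 by simp
        qed (simp add: ap_def)
      qed
      moreover have "?u \<in> V p r" using vV by (auto simp: V_def)
      moreover have "ap p R R (bdiag Ms) (\<lambda>j. v (r + j)) = (\<lambda>j. v (r + j))"
      proof (intro ext)
        fix j show "ap p R R (bdiag Ms) (\<lambda>j. v (r + j)) j = v (r + j)"
        proof (cases "j < R")
          case True
          show ?thesis using fun_cong[OF vf, of "r + j"] True by simp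
        next
          case False then show ?thesis using vV by (simp add: ap_def V_def)
        qed
      qed
      moreover have "(\<lambda>j. v (r + j)) \<in> V p R" using vV by (auto simp: V_def)
      ultimately show "?u \<in> Fix p r M \<and> (\<lambda>j. v (r + j)) \<in> Fix p R (bdiag Ms)" by (simp add: Fix_def)
    qed
  qed
  then have "card (Fix p r M \<times> Fix p R (bdiag Ms)) = card (Fix p (r + R) ?B)" by (rule bij_betw_same_card)
  then show ?thesis by (simp add: card_cartesian_product)
qed

lemma card_Fix_bdiag:
  assumes p: "0 < p" and blocks: "\<forall>x\<in>set L. card (Fix p (fst x) (snd x)) = p"
  shows "card (Fix p (sum_list (map fst L)) (bdiag L)) = p ^ length L"
  using blocks
proof (induction L)
  case Nil
  have "Fix p 0 mzero = {zv}"
    by (auto simp: Fix_def V_def zv_def ap_def fun_eq_iff)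
  then show ?case by simp
next
  case (Cons x L)
  obtain r M where x: "x = (r, M)" by force
  have "card (Fix p (sum_list (map fst (x # L))) (bdiag (x # L))) = card (Fix p r M) * card (Fix p (sum_list (map fst L)) (bdiag L))"
    using card_Fix_cons[OF p] by (simp add: x)
  then show ?case using Cons by (simp add: x)
qed

lemma card_Fix_const:
  assumes p: "0 < p" and m: "0 < m"
    and fixd: "\<And>v. v \<in> Fix p m M \<Longrightarrow> \<forall>i<m. v i = f i (v 0)"
    and f0: "\<And>s. 0 \<le> s \<Longrightarrow> s < int p \<Longrightarrow> f 0 s = s"
    and fV: "\<And>s. 0 \<le> s \<Longrightarrow> s < int p \<Longrightarrow> (\<lambda>i. if i < m then f i s else 0) \<in> Fix p m M"
  shows "card (Fix p m M) = p"
proof -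
  have "bij_betw (\<lambda>v. v 0) (Fix p m M) {0..<int p}"
  proof (rule bij_betw_byWitness[where f'="\<lambda>s. (\<lambda>i. if i < m then f i s else 0)"])
    show "\<forall>a\<in>Fix p m M. (\<lambda>i. if i < m then f i (a 0) else 0) = a"
    proof
      fix v assume v: "v \<in> Fix p m M"
      then have "v \<in> V p m" by (simp add: Fix_def)
      show "(\<lambda>i. if i < m then f i (v 0) else 0) = v"
      proof
        fix i show "(if i < m then f i (v 0) else 0) = v i"
        proof (cases "i < m")
          case True
          have "v i = f i (v 0)" using mp[OF spec[OF fixd[OF v], of i] True] .
          then show ?thesis using True by simp
        next
          case False then show ?thesis using \<open>v \<in> V p m\<close> unfolding V_def by simp
        qed
      qed
    qed
    show "\<forall>a'\<in>{0..<int p}. (if 0 < m then f 0 a' else 0) = a'" using m f0 by auto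
    show "(\<lambda>v. v 0) ` Fix p m M \<subseteq> {0..<int p}" using m by (auto simp: Fix_def V_def)
    show "(\<lambda>s i. if i < m then f i s else 0) ` {0..<int p} \<subseteq> Fix p m M" using fV by auto
  qed
  then have "card (Fix p m M) = card {0..<int p}" by (rule bij_betw_same_card)
  then show ?thesis by simp
qed

lemma card_Fix_triv: assumes p: "2 \<le> p" shows "card (Fix p 1 (triv_mat p)) = p"
proof (rule card_Fix_const[where f="\<lambda>i s. s"])
  have F: "Fix p 1 (triv_mat p) = V p 1"
    by (auto simp: Fix_def triv_mat_def ap_mint vsc_one)
  show "\<And>v. v \<in> Fix p 1 (triv_mat p) \<Longrightarrow> \<forall>i<1. v i = v 0" by simp
  show "\<And>s. 0 \<le> s \<Longrightarrow> s < int p \<Longrightarrow> (\<lambda>i. if i < 1 then s else 0) \<in> Fix p 1 (triv_mat p)"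
    unfolding F by (simp add: V_def)
qed (use p in auto)

lemma reg_entry:
  fixes p i j :: nat
  assumes p: "2 \<le> p" and i: "i < p" and j: "j < p"
  shows "(i = (j + 1) mod p) \<longleftrightarrow> (j = (i + p - 1) mod p)"
proof (cases "j + 1 < p")
  case True
  show ?thesis
  proof (cases i)
    case 0 then show ?thesis using True p by simp
  next
    case (Suc i')
    then have "(i + p - 1) mod p = (i' + p) mod p" by simp
    also have "\<dots> = i'" using i Suc by simp
    finally have "(i + p - 1) mod p = i'" .
    then show ?thesis using True Suc by auto
  qed
next
  case False
  then have j': "j = p - 1" using j by simp
  show ?thesis
  proof (cases i)
    case 0 then show ?thesis using j' p by simp
  next
    case (Suc i')
    then have "(i + p - 1) mod p = (i' + p) mod p" by simp
    also have "\<dots> = i'" using i Suc by simp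
    finally have "(i + p - 1) mod p = i'" .
    then show ?thesis using Suc j' p i by auto
  qed
qed

lemma ap_reg:
  assumes p: "2 \<le> p" and i: "i < p"
  shows "ap p p p (reg_mat p) v i = v ((i + p - 1) mod p) mod int p"
proof -
  have one: "1 mod int p = 1" using p by simp
  have "(\<Sum>j<p. reg_mat p i j 1 * v j) = (\<Sum>j<p. if j = (i + p - 1) mod p then v j else 0)"
  proof (rule sum.cong)
    fix j assume "j \<in> {..<p}"
    then have j: "j < p" by simp
    have "reg_mat p i j 1 = (if i = (j + 1) mod p then 1 else 0)"
      using i j by (simp add: reg_mat_def zp_of_int_def zzero_def one)
    then show "reg_mat p i j 1 * v j = (if j = (i + p - 1) mod p then v j else 0)"
      unfolding reg_entry[OF p i j] by simp
  qed simp
  also have "\<dots> = v ((i + p - 1) mod p)" using p by simp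
  finally show ?thesis using i by (simp add: ap_def)
qed

lemma card_Fix_reg: assumes p: "2 \<le> p" shows "card (Fix p p (reg_mat p)) = p"
proof (rule card_Fix_const[where f="\<lambda>i s. s"])
  show "\<forall>i<p. v i = v 0" if v: "v \<in> Fix p p (reg_mat p)" for v
  proof (intro allI impI)
    fix i assume "i < p"
    then show "v i = v 0"
    proof (induction i)
      case (Suc i)
      have vV: "v \<in> V p p" and vf: "ap p p p (reg_mat p) v = v" using v by (auto simp: Fix_def)
      have "(Suc i + p - 1) mod p = i" using Suc.prems by simp
      then have "v (Suc i) = v i mod int p" using fun_cong[OF vf, of "Suc i"] ap_reg[OF p Suc.prems] by simp
      then show ?case using Suc V_mod[OF vV] by simp
    qed simp
  qed
  show "(\<lambda>i. if i < p then s else 0) \<in> Fix p p (reg_mat p)" if "0 \<le> s" "s < int p" for s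
  proof -
    have "ap p p p (reg_mat p) (\<lambda>i. if i < p then s else 0) i = (if i < p then s else 0)" for i
    proof (cases "i < p")
      case True
      have "(i + p - 1) mod p < p" using p by simp
      then show ?thesis using True ap_reg[OF p True] that by simp
    qed (simp add: ap_def)
    then show ?thesis using that by (auto simp: Fix_def V_def)
  qed
qed (use p in auto)

lemma ap_aug:
  assumes p: "2 \<le> p" and i: "i < p - 1"
  shows "ap p (p - 1) (p - 1) (aug_mat p) v i
     = ((if 0 < i then v (i - 1) else 0) + ((-1) mod int p) * v (p - 2)) mod int p"
proof -
  have sp: "{..<p - 1} = insert (p - 2) {..<p - 2}" using p by auto
  have "(\<Sum>j<p - 1. aug_mat p i j 1 * v j) = aug_mat p i (p - 2) 1 * v (p - 2) + (\<Sum>j<p - 2. aug_mat p i j 1 * v j)"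
    unfolding sp by simp
  also have "aug_mat p i (p - 2) 1 = (-1) mod int p" using i p by (simp add: aug_mat_def zp_of_int_def)
  also have "(\<Sum>j<p - 2. aug_mat p i j 1 * v j) = (\<Sum>j<p - 2. if j = i - 1 \<and> 0 < i then v j else 0)"
    by (rule sum.cong) (auto simp: aug_mat_def zp_of_int_def zzero_def i p)
  also have "\<dots> = (if 0 < i then v (i - 1) else 0)" using i by (auto simp: sum.delta)
  finally show ?thesis using i by (simp add: ap_def add.commute)
qed

lemma card_Fix_aug: assumes p: "2 \<le> p" shows "card (Fix p (p - 1) (aug_mat p)) = p"
proof (rule card_Fix_const[where f="\<lambda>i s. ((int i + 1) * s) mod int p"])
  show "\<forall>i<p - 1. v i = ((int i + 1) * v 0) mod int p" if v: "v \<in> Fix p (p - 1) (aug_mat p)" for v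
  proof -
    have vV: "v \<in> V p (p - 1)" and vf: "ap p (p - 1) (p - 1) (aug_mat p) v = v" using v by (auto simp: Fix_def)
    have e0: "v 0 = (((-1) mod int p) * v (p - 2)) mod int p"
      using fun_cong[OF vf, of 0] ap_aug[OF p, of 0] p by simp
    show ?thesis
    proof (intro allI impI)
      fix i assume "i < p - 1"
      then show "v i = ((int i + 1) * v 0) mod int p"
      proof (induction i)
        case 0 then show ?case using V_mod[OF vV] by simp
      next
        case (Suc i)
        have "v (Suc i) = (v i + ((-1) mod int p) * v (p - 2)) mod int p"
          using fun_cong[OF vf, of "Suc i"] ap_aug[OF p Suc.prems] by simp
        also have "\<dots> = (v i + (((-1) mod int p) * v (p - 2)) mod int p) mod int p" by (simp add: mod_add_right_eq)
        also have "\<dots> = (((int i + 1) * v 0) mod int p + v 0) mod int p" using Suc e0 by simp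
        also have "\<dots> = ((int i + 1) * v 0 + v 0) mod int p" by (simp only: mod_add_left_eq)
        also have "\<dots> = ((int (Suc i) + 1) * v 0) mod int p" by (simp add: algebra_simps)
        finally show ?case .
      qed
    qed
  qed
  show "(\<lambda>i. if i < p - 1 then ((int i + 1) * s) mod int p else 0) \<in> Fix p (p - 1) (aug_mat p)"
    if s: "0 \<le> s" "s < int p" for s
  proof -
    let ?w = "\<lambda>i. if i < p - 1 then ((int i + 1) * s) mod int p else 0"
    have "ap p (p - 1) (p - 1) (aug_mat p) ?w i = ?w i" for i
    proof (cases "i < p - 1")
      case True
      have w2: "?w (p - 2) = ((int p - 1) * s) mod int p" using p by (simp add: of_nat_diff)
      have "ap p (p - 1) (p - 1) (aug_mat p) ?w i
          = ((if 0 < i then ?w (i - 1) else 0) + ((-1) mod int p) * ?w (p - 2)) mod int p"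
        by (rule ap_aug[OF p True])
      also have "\<dots> = (int i * s + (-1) * ((int p - 1) * s)) mod int p"
      proof -
        have a: "(if 0 < i then ?w (i - 1) else 0) mod int p = (int i * s) mod int p"
          using True by (cases i) (auto simp: of_nat_diff add.commute)
        have b: "(((-1) mod int p) * ?w (p - 2)) mod int p = ((-1) * ((int p - 1) * s)) mod int p"
          unfolding w2 by (simp add: mod_mult_left_eq mod_mult_right_eq)
        show ?thesis using a b mod_add_eq by (metis (no_types))
      qed
      also have "\<dots> = ((int i + 1) * s + (- s) * int p) mod int p" by (simp add: algebra_simps)
      also have "\<dots> = ((int i + 1) * s) mod int p" by (rule mod_mult_self1)
      finally show ?thesis using True by simp
    qed (simp add: ap_def)
    then have "ap p (p - 1) (p - 1) (aug_mat p) ?w = ?w" by auto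
    then show ?thesis using p by (auto simp: Fix_def V_def)
  qed
qed (use p in auto)

lemma card_Fix_std:
  assumes p: "2 \<le> p"
  shows "card (Fix p (a + p * b + (p - 1) * c) (std_sum p a b c)) = p ^ (a + b + c)"
proof -
  let ?L = "replicate a (1, triv_mat p) @ replicate b (p, reg_mat p) @ replicate c (p - 1, aug_mat p)"
  have s: "sum_list (map fst ?L) = a + p * b + (p - 1) * c"
    by (simp add: sum_list_replicate)
  have "card (Fix p (sum_list (map fst ?L)) (bdiag ?L)) = p ^ length ?L"
    by (rule card_Fix_bdiag) (use p card_Fix_triv card_Fix_reg card_Fix_aug in auto)
  then show ?thesis unfolding std_sum_def s by (simp add: add.assoc)
qed

lemma exact_from_mod:
  fixes T k :: int
  assumes p2: "2 \<le> p" and cop: "coprime k (int p)" and h: "\<forall>l. (k * T) mod (int p ^ l) = 0"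
  shows "T = 0"
proof (rule ccontr)
  assume T: "T \<noteq> 0"
  define l where "l = nat \<bar>T\<bar> + 1"
  have "int p ^ l dvd k * T" using h by (simp add: dvd_eq_mod_eq_0)
  moreover have "coprime (int p ^ l) k" using cop by (simp add: coprime_commute)
  ultimately have "int p ^ l dvd T" by (simp add: coprime_dvd_mult_right_iff)
  then have le: "\<bar>int p ^ l\<bar> \<le> \<bar>T\<bar>" using T by (rule dvd_imp_le_int[rotated])
  have "(2::int) ^ l \<le> int p ^ l" using p2 by (intro power_mono) auto
  moreover have "int l < 2 ^ l"
  proof -
    have "int l < int (2 ^ l)" using less_exp[of l] by (simp only: of_nat_less_iff)
    then show ?thesis by simp
  qed
  ultimately have "\<bar>T\<bar> < int p ^ l" unfolding l_def by simp
  then show False using le by simp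
qed

lemma mod_sum_transfer:
  fixes x y :: "nat \<Rightarrow> int"
  assumes "\<forall>i\<le>n. x i mod P = y i mod P"
  shows "(k * (\<Sum>i\<le>n. (-1) ^ i * x i)) mod P = (k * (\<Sum>i\<le>n. (-1) ^ i * y i)) mod P"
proof -
  have "(\<Sum>i\<le>n. (-1) ^ i * x i) mod P = (\<Sum>i\<le>n. (-1) ^ i * (x i mod P)) mod P"
    by (rule sum_mod_right[symmetric])
  also have "\<dots> = (\<Sum>i\<le>n. (-1) ^ i * (y i mod P)) mod P"
    using assms by (intro arg_cong[where f="\<lambda>z. z mod P"] sum.cong) auto
  also have "\<dots> = (\<Sum>i\<le>n. (-1) ^ i * y i) mod P"
    by (rule sum_mod_right)
  finally have X: "(\<Sum>i\<le>n. (-1) ^ i * x i) mod P = (\<Sum>i\<le>n. (-1) ^ i * y i) mod P" .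
  have "(k * (\<Sum>i\<le>n. (-1) ^ i * x i)) mod P = (k * ((\<Sum>i\<le>n. (-1) ^ i * x i) mod P)) mod P"
    by (simp add: mod_mult_right_eq)
  also have "\<dots> = (k * ((\<Sum>i\<le>n. (-1) ^ i * y i) mod P)) mod P" by (simp only: X)
  also have "\<dots> = (k * (\<Sum>i\<le>n. (-1) ^ i * y i)) mod P" by (simp add: mod_mult_right_eq)
  finally show ?thesis .
qed

theorem lemma2p9:
  fixes p n :: nat and k :: int and r a b c :: "nat \<Rightarrow> nat" and S d ds :: "nat \<Rightarrow> zpmat"
  assumes "prime p" and "coprime k (int p)"
    and "\<forall>i\<le>n. glat p (r i) (S i)"
    and "\<forall>i<n. gmap p (r i) (S i) (r (Suc i)) (S (Suc i)) (d i)"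
    and "\<forall>i<n. gmap p (r (Suc i)) (S (Suc i)) (r i) (S i) (ds i)"
    and "\<forall>i. Suc i < n \<longrightarrow> mmul p (r (Suc (Suc i))) (r (Suc i)) (r i) (d (Suc i)) (d i) = mzero"
    and "\<forall>i. Suc i < n \<longrightarrow> mmul p (r i) (r (Suc i)) (r (Suc (Suc i))) (ds i) (ds (Suc i)) = mzero"
    and "\<forall>i\<le>n. madd p (r i) (r i)
            (if 0 < i then mmul p (r i) (r (i - 1)) (r i) (d (i - 1)) (ds (i - 1)) else mzero)
            (if i < n then mmul p (r i) (r (Suc i)) (r i) (ds i) (d i) else mzero)
          = mint p (r i) k"
    and "\<forall>i\<le>n. has_class p (r i) (S i) (a i) (b i) (c i)"
  shows "(\<Sum>i\<le>n. (-1) ^ i * int (a i)) = 0 \<and> (\<Sum>i\<le>n. (-1) ^ i * int (b i)) = 0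
         \<and> (\<Sum>i\<le>n. (-1) ^ i * int (c i)) = 0"
proof -
  note gd = assms(4) and gds = assms(5) and dd = assms(6) and dsds = assms(7) and rel = assms(8)
  have p2: "2 \<le> p" using assms(1) by (rule prime_ge_2_nat)
  then have p0: "0 < p" by simp
  have cop: "coprime k (int p)" by (rule assms(2))
  obtain u v where uv: "u * k + v * int p = gcd k (int p)" using bezout_int by blast
  then have "u * k + v * int p = 1" using cop by simp
  then have "u * k = 1 + (- v) * int p" by simp
  then have "(u * k) mod int p = (1 + (- v) * int p) mod int p" by simp
  also have "\<dots> = 1 mod int p" by (rule mod_mult_self1)
  finally have "(u * k) mod int p = 1 mod int p" .
  then have kk: "(u * k) mod int p = 1" using p2 by simp
  have rr: "r i = a i + p * b i + (p - 1) * c i" and iso: "giso p (r i) (S i) (r i) (std_sum p (a i) (b i) (c i))"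
    if "i \<le> n" for i
    using assms(9) that by (auto simp: has_class_def)
  have cardF: "card (Fix p (r i) (S i)) = p ^ (a i + b i + c i)" if "i \<le> n" for i
  proof -
    have "card (Fix p (r i) (S i)) = card (Fix p (r i) (std_sum p (a i) (b i) (c i)))"
      using Fix_iso[OF p0 iso[OF that]] .
    also have "\<dots> = p ^ (a i + b i + c i)" unfolding rr[OF that] by (rule card_Fix_std[OF p2])
    finally show ?thesis .
  qed
  have ft: "(\<Sum>i\<le>n. (-1) ^ i * ln (real (card (Fix p (r i) (S i))))) = 0"
    by (rule fix_telescope[OF p0 kk gd gds dd dsds rel])
  have "(\<Sum>i\<le>n. (-1) ^ i * ln (real (card (Fix p (r i) (S i)))))
      = (\<Sum>i\<le>n. (-1) ^ i * real (a i + b i + c i)) * ln (real p)"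
    unfolding sum_distrib_right
    by (rule sum.cong) (simp_all add: cardF ln_realpow)
  then have "(\<Sum>i\<le>n. (-1) ^ i * real (a i + b i + c i)) = 0" using ft p2 by simp
  then have E1r: "real_of_int (\<Sum>i\<le>n. (-1) ^ i * int (a i + b i + c i)) = 0" by simp
  then have E1: "(\<Sum>i\<le>n. (-1) ^ i * int (a i + b i + c i)) = 0" by linarith
  have E2: "(\<Sum>i\<le>n. (-1) ^ i * (int (a i) - int (c i))) = 0"
  proof (rule exact_from_mod[OF p2 cop], rule allI)
    fix l
    have "(k * (\<Sum>i\<le>n. (-1) ^ i * tr l (r i) (S i))) mod (int p ^ l) = 0"
      by (rule trace_telescope[OF rel]) (use gd in \<open>simp add: gmap_def\<close>)
    moreover have "\<forall>i\<le>n. tr l (r i) (S i) mod (int p ^ l) = (int (a i) - int (c i)) mod (int p ^ l)"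
    proof (intro allI impI)
      fix i assume i: "i \<le> n"
      have "tr l (r i) (S i) mod (int p ^ l) = tr l (r i) (std_sum p (a i) (b i) (c i)) mod (int p ^ l)"
        by (rule tr_iso[OF iso[OF i]])
      also have "\<dots> = (int (a i) - int (c i)) mod (int p ^ l)"
        unfolding rr[OF i] by (rule tr_std[OF p2])
      finally show "tr l (r i) (S i) mod (int p ^ l) = (int (a i) - int (c i)) mod (int p ^ l)" .
    qed
    ultimately show "(k * (\<Sum>i\<le>n. (-1) ^ i * (int (a i) - int (c i)))) mod (int p ^ l) = 0"
      using mod_sum_transfer[of n "\<lambda>i. tr l (r i) (S i)" "int p ^ l" "\<lambda>i. int (a i) - int (c i)" k] by simp
  qed
  have E3: "(\<Sum>i\<le>n. (-1) ^ i * int (r i)) = 0"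
  proof (rule exact_from_mod[OF p2 cop], rule allI)
    fix l
    have "(k * (\<Sum>i\<le>n. (-1) ^ i * tr l (r i) (mint p (r i) 1))) mod (int p ^ l) = 0"
      by (rule trace_telescope[OF rel]) (simp add: mint_comm)
    moreover have "\<forall>i\<le>n. tr l (r i) (mint p (r i) 1) mod (int p ^ l) = int (r i) mod (int p ^ l)"
      by (simp add: tr_mint mod_mult_right_eq)
    ultimately show "(k * (\<Sum>i\<le>n. (-1) ^ i * int (r i))) mod (int p ^ l) = 0"
      using mod_sum_transfer[of n "\<lambda>i. tr l (r i) (mint p (r i) 1)" "int p ^ l" "\<lambda>i. int (r i)" k] by simp
  qed
  define A where "A = (\<Sum>i\<le>n. (-1) ^ i * int (a i))"
  define B where "B = (\<Sum>i\<le>n. (-1) ^ i * int (b i))"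
  define C where "C = (\<Sum>i\<le>n. (-1) ^ i * int (c i))"
  have "(\<Sum>i\<le>n. (-1) ^ i * int (a i + b i + c i)) = A + B + C"
    by (simp add: A_def B_def C_def sum.distrib distrib_left)
  then have e1: "A + B + C = 0" using E1 by simp
  have "(\<Sum>i\<le>n. (-1) ^ i * (int (a i) - int (c i))) = A - C"
    by (simp add: A_def C_def sum_subtractf right_diff_distrib)
  then have e2: "A - C = 0" using E2 by simp
  have "(\<Sum>i\<le>n. (-1) ^ i * int (r i)) = (\<Sum>i\<le>n. (-1) ^ i * int (a i) + int p * ((-1) ^ i * int (b i)) + (int p - 1) * ((-1) ^ i * int (c i)))"
  proof (rule sum.cong)
    fix i assume "i \<in> {..n}"
    then have i: "i \<le> n" by simp
    have ri: "int (r i) = int (a i) + int p * int (b i) + (int p - 1) * int (c i)"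
      using rr[OF i] p2 by (simp add: of_nat_diff)
    show "(-1) ^ i * int (r i) = (-1) ^ i * int (a i) + int p * ((-1) ^ i * int (b i)) + (int p - 1) * ((-1) ^ i * int (c i))"
      unfolding ri by (simp add: algebra_simps)
  qed simp
  also have "\<dots> = A + int p * B + (int p - 1) * C"
    by (simp add: A_def B_def C_def sum.distrib sum_distrib_left)
  finally have e3: "A + int p * B + (int p - 1) * C = 0" using E3 by simp
  have CA: "C = A" using e2 by simp
  have BA: "B = - 2 * A" using e1 CA by simp
  have "A + int p * B + (int p - 1) * C = - (int p * A)" unfolding BA CA by (simp add: algebra_simps)
  then have "int p * A = 0" using e3 by simp
  then have "A = 0" using p2 by simp
  then have "A = 0 \<and> B = 0 \<and> C = 0" using e1 e2 by simp
  then show ?thesis by (simp add: A_def B_def C_def)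
qed

end
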